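(* Let $L$ be an $S$-Noetherian lattice, where $S$ is a multiplicatively closed subset of $L$ with $1\in S$, $0\notin S$. Let $q_1,\dots,q_n\in L$ and let $p$ be an $S$-prime element of $L$ such that $\bigwedge_{i=1}^n q_i\le p$. Then there exist $s\in S$ and an index $k$ such that $sq_k\le p$. In particular, if $p=\bigwedge_{i=1}^n q_i$, then there exist $s\in S$ and $k$ such that $sq_k\le p\le q_k$.
   Context: A multiplicative lattice is a complete lattice with a commutative, associative multiplication distributing over arbitrary joins, with $1$ as identity; $L_*$ is the set of compact elements; $(a:b)=\bigvee\{x\mid xb\le a\}$. An element $m$ is principal if $a\wedge mb=m((a:m)\wedge b)$ and $a\vee(b:m)=(am\vee b):m$ for all $a,b$. An $r$-lattice is a modular, principally generated, compactly generated multiplicative lattice with $1$ compact. A multiplicatively closed subset is a nonempty $S\subseteq L_*$ closed under multiplication. An element $a$ is $S$-compact if $sa\le b\le a$ for some compact $b$ and $s\in S$; an $S$-Noetherian lattice is an $r$-lattice in which every element is $S$-compact. A proper element $p$ with $t\not\le p$ for all $t\in S$ is $S$-prime if there exists $s\in S$ such that for all $a,b\in L$, $ab\le p$ implies $sa\le p$ or $sb\le p$. *)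

theory Defs
  imports Main
begin

definition mult_lattice :: "('a::complete_lattice \<Rightarrow> 'a \<Rightarrow> 'a) \<Rightarrow> bool" where
  "mult_lattice m \<longleftrightarrow>
     (\<forall>a b. m a b = m b a) \<and>
     (\<forall>a b c. m (m a b) c = m a (m b c)) \<and>
     (\<forall>a X. m a (Sup X) = Sup ((m a) ` X)) \<and>
     (\<forall>a. m top a = a)"

definition compact_el :: "'a::complete_lattice \<Rightarrow> bool" where
  "compact_el x \<longleftrightarrow> (\<forall>X. x \<le> Sup X \<longrightarrow> (\<exists>F. F \<subseteq> X \<and> finite F \<and> x \<le> Sup F))"

definition lres :: "('a::complete_lattice \<Rightarrow> 'a \<Rightarrow> 'a) \<Rightarrow> 'a \<Rightarrow> 'a \<Rightarrow> 'a" where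
  "lres m a b = Sup {x. m x b \<le> a}"

definition principal_el :: "('a::complete_lattice \<Rightarrow> 'a \<Rightarrow> 'a) \<Rightarrow> 'a \<Rightarrow> bool" where
  "principal_el m e \<longleftrightarrow>
     (\<forall>a b. inf a (m e b) = m e (inf (lres m a e) b)) \<and>
     (\<forall>a b. sup a (lres m b e) = lres m (sup (m a e) b) e)"

definition modular_lat :: "'a::complete_lattice itself \<Rightarrow> bool" where
  "modular_lat _ \<longleftrightarrow> (\<forall>a b c::'a. a \<le> c \<longrightarrow> sup a (inf b c) = inf (sup a b) c)"

definition r_lattice :: "('a::complete_lattice \<Rightarrow> 'a \<Rightarrow> 'a) \<Rightarrow> bool" where
  "r_lattice m \<longleftrightarrow>
     mult_lattice m \<and> modular_lat TYPE('a) \<and>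
     (\<forall>a::'a. \<exists>X. (\<forall>x\<in>X. principal_el m x) \<and> a = Sup X) \<and>
     (\<forall>a::'a. \<exists>X. (\<forall>x\<in>X. compact_el x) \<and> a = Sup X) \<and>
     compact_el (top::'a)"

definition mult_closed :: "('a::complete_lattice \<Rightarrow> 'a \<Rightarrow> 'a) \<Rightarrow> 'a set \<Rightarrow> bool" where
  "mult_closed m S \<longleftrightarrow> S \<noteq> {} \<and> (\<forall>s\<in>S. compact_el s) \<and> (\<forall>s\<in>S. \<forall>t\<in>S. m s t \<in> S)"

definition S_compact :: "('a::complete_lattice \<Rightarrow> 'a \<Rightarrow> 'a) \<Rightarrow> 'a set \<Rightarrow> 'a \<Rightarrow> bool" where
  "S_compact m S a \<longleftrightarrow> (\<exists>s\<in>S. \<exists>b. compact_el b \<and> m s a \<le> b \<and> b \<le> a)"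

definition S_Noetherian :: "('a::complete_lattice \<Rightarrow> 'a \<Rightarrow> 'a) \<Rightarrow> 'a set \<Rightarrow> bool" where
  "S_Noetherian m S \<longleftrightarrow> r_lattice m \<and> (\<forall>a. S_compact m S a)"

definition S_prime :: "('a::complete_lattice \<Rightarrow> 'a \<Rightarrow> 'a) \<Rightarrow> 'a set \<Rightarrow> 'a \<Rightarrow> bool" where
  "S_prime m S p \<longleftrightarrow> p \<noteq> top \<and> (\<forall>t\<in>S. \<not> t \<le> p) \<and>
     (\<exists>s\<in>S. \<forall>a b. m a b \<le> p \<longrightarrow> m s a \<le> p \<or> m s b \<le> p)"

end

theory Submission
  imports Defs
begin

lemma ml_mono:
  assumes "mult_lattice m" "a \<le> b" shows "m c a \<le> m c b"
proof -
  have d: "\<And>X. m c (Sup X) = Sup (m c ` X)" using assms(1) unfolding mult_lattice_def by blast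
  have "m c b = m c (Sup {a,b})" using assms(2) by (simp add: sup_absorb2)
  also have "\<dots> = Sup (m c ` {a,b})" by (rule d)
  also have "\<dots> = Sup {m c a, m c b}" by simp
  also have "\<dots> = sup (m c a) (m c b)" by simp
  finally have e: "m c b = sup (m c a) (m c b)" .
  show ?thesis by (subst e) (rule sup.cobounded1)
qed

lemma ml_comm: "mult_lattice m \<Longrightarrow> m a b = m b a" unfolding mult_lattice_def by blast
lemma ml_topl: "mult_lattice m \<Longrightarrow> m top a = a" unfolding mult_lattice_def by blast
lemma ml_topr: "mult_lattice m \<Longrightarrow> m a top = a" using ml_comm ml_topl by metis

lemma ml_le_right:
  assumes "mult_lattice m" shows "m a b \<le> b"
proof -
  have "m b a \<le> m b top" by (rule ml_mono[OF assms top_greatest])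
  then show ?thesis using ml_topr[OF assms] ml_comm[OF assms] by metis
qed

fun P :: "('a::complete_lattice \<Rightarrow> 'a \<Rightarrow> 'a) \<Rightarrow> (nat \<Rightarrow> 'a) \<Rightarrow> nat \<Rightarrow> 'a" where
  "P m q 0 = top"
| "P m q (Suc k) = m (P m q k) (q (Suc k))"

lemma P_le:
  assumes "mult_lattice m" shows "i \<in> {1..k} \<Longrightarrow> P m q k \<le> q i"
proof (induction k)
  case 0 then show ?case by simp
next
  case (Suc k)
  have c: "\<And>a b. m a b = m b a" using assms unfolding mult_lattice_def by blast
  show ?case
  proof (cases "i = Suc k")
    case True then show ?thesis using ml_le_right[OF assms] by simp
  next
    case False
    then have h1: "P m q k \<le> q i" using Suc by auto
    have h2: "P m q (Suc k) \<le> P m q k" using ml_le_right[OF assms, of "q (Suc k)" "P m q k"] c[of "P m q k" "q (Suc k)"] by simp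
    show ?thesis by (rule order_trans[OF h2 h1])
  qed
qed

lemma key:
  assumes ml: "mult_lattice m" and mc: "mult_closed m S" and sp: "S_prime m S p"
  shows "\<And>t. t \<in> S \<Longrightarrow> m t (P m q k) \<le> p \<Longrightarrow> \<exists>s\<in>S. \<exists>i\<in>{1..k}. m s (q i) \<le> p"
proof (induction k)
  case (0 t)
  have "m t top = t" using ml by (rule ml_topr)
  then show ?case using 0 sp unfolding S_prime_def by auto
next
  case (Suc k t)
  obtain s where s: "s \<in> S" "\<And>a b. m a b \<le> p \<Longrightarrow> m s a \<le> p \<or> m s b \<le> p"
    using sp unfolding S_prime_def by blast
  have as: "\<And>a b c. m (m a b) c = m a (m b c)" using ml unfolding mult_lattice_def by blast
  have "m (m t (P m q k)) (q (Suc k)) \<le> p" using Suc.prems as by simp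
  then have "m s (m t (P m q k)) \<le> p \<or> m s (q (Suc k)) \<le> p" using s by blast
  then show ?case
  proof
    assume "m s (m t (P m q k)) \<le> p"
    then have "m (m s t) (P m q k) \<le> p" using as by simp
    moreover have "m s t \<in> S" using mc s Suc.prems unfolding mult_closed_def by blast
    ultimately obtain s' i where "s' \<in> S" "i \<in> {1..k}" "m s' (q i) \<le> p" using Suc.IH by blast
    then show ?thesis by (intro bexI[of _ s'] bexI[of _ i]) auto
  next
    assume "m s (q (Suc k)) \<le> p" then show ?thesis using s(1) by (intro bexI[of _ s] bexI[of _ "Suc k"]) auto
  qed
qed

theorem mainTheorem10:
  fixes m :: "'a::complete_lattice \<Rightarrow> 'a \<Rightarrow> 'a"
    and S :: "'a set" and q :: "nat \<Rightarrow> 'a" and n :: nat and p :: 'a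
  assumes "S_Noetherian m S"
    and "mult_closed m S"
    and "top \<in> S" and "bot \<notin> S"
    and "S_prime m S p"
    and "(INF i\<in>{1..n}. q i) \<le> p"
  shows "(\<exists>s\<in>S. \<exists>k\<in>{1..n}. m s (q k) \<le> p) \<and>
         (p = (INF i\<in>{1..n}. q i) \<longrightarrow> (\<exists>s\<in>S. \<exists>k\<in>{1..n}. m s (q k) \<le> p \<and> p \<le> q k))"
proof -
  have ml: "mult_lattice m" using assms(1) unfolding S_Noetherian_def r_lattice_def by blast
  have "P m q n \<le> (INF i\<in>{1..n}. q i)" using P_le[OF ml] by (simp add: le_INF_iff)
  then have h: "P m q n \<le> p" using assms(6) by (rule order_trans)
  have "m top (P m q n) = P m q n" using ml unfolding mult_lattice_def by blast
  with h have "m top (P m q n) \<le> p" by simp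
  then have A: "\<exists>s\<in>S. \<exists>k\<in>{1..n}. m s (q k) \<le> p"
    by (rule key[OF ml assms(2) assms(5) assms(3)])
  have "p = (INF i\<in>{1..n}. q i) \<Longrightarrow> k \<in> {1..n} \<Longrightarrow> p \<le> q k" for k
    by (simp add: INF_lower)
  then show ?thesis using A by blast
qed

end
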